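(* Let $E\in M(m)$ be a real matrix all of whose eigenvalues have positive real parts, and let $H\in M(n)$. Let $h:\mathbb{R}^m\to M(n,\mathbb{C})$ be measurable and such that, for every $c>0$, $h(c^{E}x)=c^{H}h(x)$ for Lebesgue-a.e. $x\in\mathbb{R}^m$ (the null set may depend on $c$). Then there exists an $(E,H)$-left-homogeneous function $\varphi$ with $\varphi(x)=h(x)$ for Lebesgue-a.e. $x$.
   Context: For a square matrix $M$ and $c>0$, $c^{M}:=\sum_{k\ge0}(\log c)^kM^k/k!$. A function $\varphi:\mathbb{R}^m\to M(n,\mathbb{C})$ is called $(E,H)$-left-homogeneous if $\varphi(c^{E}x)=c^{H}\varphi(x)$ for all $c>0$ and all $x\in\mathbb{R}^m\setminus\{0\}$. *)

theory Defs
  imports "HOL-Analysis.Analysis"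
begin

definition mat_pow :: "('a::semiring_1)^'n^'n \<Rightarrow> nat \<Rightarrow> 'a^'n^'n" where
  "mat_pow M k = (((**) M) ^^ k) (mat 1)"

definition mat_cpow :: "real \<Rightarrow> real^'n^'n \<Rightarrow> real^'n^'n" where
  "mat_cpow c M = (\<Sum>k. ((ln c) ^ k / fact k) *\<^sub>R mat_pow M k)"

definition cmat :: "real^'n^'n \<Rightarrow> complex^'n^'n" where
  "cmat M = (\<chi> i j. complex_of_real (M $ i $ j))"

definition is_eigenvalue :: "real^'n^'n \<Rightarrow> complex \<Rightarrow> bool" where
  "is_eigenvalue M l \<longleftrightarrow> (\<exists>v::complex^'n. v \<noteq> 0 \<and> cmat M *v v = l *s v)"

definition left_homogeneous ::
  "real^'m^'m \<Rightarrow> real^'n^'n \<Rightarrow> (real^'m \<Rightarrow> complex^'n^'n) \<Rightarrow> bool" where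
  "left_homogeneous E H \<phi> \<longleftrightarrow>
     (\<forall>c>0. \<forall>x. x \<noteq> 0 \<longrightarrow> \<phi> (mat_cpow c E *v x) = cmat (mat_cpow c H) ** \<phi> x)"

end

theory Submission
  imports Defs
begin

lemma bilinear_mm: "bilinear ((**) :: real^'n^'n \<Rightarrow> real^'n^'n \<Rightarrow> real^'n^'n)"
  unfolding bilinear_def
  by (auto intro!: linearI simp: matrix_add_ldistrib
      matrix_matrix_mult_def vec_eq_iff sum.distrib distrib_right distrib_left sum_distrib_left mult_ac)

lemma bb_mm: "bounded_bilinear ((**) :: real^'n^'n \<Rightarrow> real^'n^'n \<Rightarrow> real^'n^'n)"
  using bilinear_mm bilinear_conv_bounded_bilinear by blast

lemma Cauchy_product_sums_bb:
  fixes a b :: "nat \<Rightarrow> 'a::banach" and prod :: "'a \<Rightarrow> 'a \<Rightarrow> 'a"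
  assumes bb: "bounded_bilinear prod"
  assumes a: "summable (\<lambda>k. norm (a k))"
    and b: "summable (\<lambda>k. norm (b k))"
  shows "(\<lambda>k. \<Sum>i\<le>k. prod (a i) (b (k - i))) sums (prod (\<Sum>k. a k) (\<Sum>k. b k))"
proof -
  obtain K where K: "K > 0" "\<And>x y. norm (prod x y) \<le> norm x * norm y * K"
    using bounded_bilinear.pos_bounded[OF bb] by blast
  let ?S1 = "\<lambda>n::nat. {..<n} \<times> {..<n}"
  let ?S2 = "\<lambda>n::nat. {(i,j). i + j < n}"
  have S1_mono: "\<And>m n. m \<le> n \<Longrightarrow> ?S1 m \<subseteq> ?S1 n" by auto
  have S2_le_S1: "\<And>n. ?S2 n \<subseteq> ?S1 n" by auto
  have S1_le_S2: "\<And>n. ?S1 (n div 2) \<subseteq> ?S2 n" by auto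
  have finite_S1: "\<And>n. finite (?S1 n)" by simp
  with S2_le_S1 have finite_S2: "\<And>n. finite (?S2 n)" by (rule finite_subset)
  let ?g = "\<lambda>(i,j). prod (a i) (b j)"
  let ?f = "\<lambda>(i,j). norm (a i) * norm (b j) * K"
  have f_nonneg: "\<And>x. 0 \<le> ?f x" using K by auto
  then have norm_sum_f: "\<And>A. norm (sum ?f A) = sum ?f A"
    unfolding real_norm_def
    by (simp only: abs_of_nonneg sum_nonneg [rule_format])
  have sg: "\<And>n. sum ?g (?S1 n) = prod (\<Sum>k<n. a k) (\<Sum>k<n. b k)"
    unfolding bounded_bilinear.sum_left[OF bb] bounded_bilinear.sum_right[OF bb]
    by (subst sum.swap) (rule sum.cartesian_product[symmetric])
  have sf: "\<And>n. sum ?f (?S1 n) = (\<Sum>k<n. norm (a k)) * (\<Sum>k<n. norm (b k)) * K"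
    by (simp add: sum_distrib_right sum_distrib_left sum.cartesian_product[symmetric] mult_ac) (rule sum.swap)
  have "(\<lambda>n. prod (\<Sum>k<n. a k) (\<Sum>k<n. b k)) \<longlonglongrightarrow> prod (\<Sum>k. a k) (\<Sum>k. b k)"
    by (intro bounded_bilinear.tendsto[OF bb] summable_LIMSEQ summable_norm_cancel [OF a] summable_norm_cancel [OF b])
  then have 1: "(\<lambda>n. sum ?g (?S1 n)) \<longlonglongrightarrow> prod (\<Sum>k. a k) (\<Sum>k. b k)"
    by (simp only: sg)
  have "(\<lambda>n. (\<Sum>k<n. norm (a k)) * (\<Sum>k<n. norm (b k)) * K) \<longlonglongrightarrow> (\<Sum>k. norm (a k)) * (\<Sum>k. norm (b k)) * K"
    using a b by (intro tendsto_mult tendsto_const summable_LIMSEQ)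
  then have "(\<lambda>n. sum ?f (?S1 n)) \<longlonglongrightarrow> (\<Sum>k. norm (a k)) * (\<Sum>k. norm (b k)) * K"
    by (simp only: sf)
  then have "convergent (\<lambda>n. sum ?f (?S1 n))"
    by (rule convergentI)
  then have Cauchy: "Cauchy (\<lambda>n. sum ?f (?S1 n))"
    by (rule convergent_Cauchy)
  have "Zfun (\<lambda>n. sum ?f (?S1 n - ?S2 n)) sequentially"
  proof (rule ZfunI, simp only: eventually_sequentially norm_sum_f)
    fix r :: real
    assume r: "0 < r"
    from CauchyD [OF Cauchy r] obtain N
      where "\<forall>m\<ge>N. \<forall>n\<ge>N. norm (sum ?f (?S1 m) - sum ?f (?S1 n)) < r" ..
    then have "\<And>m n. N \<le> n \<Longrightarrow> n \<le> m \<Longrightarrow> norm (sum ?f (?S1 m - ?S1 n)) < r"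
      by (simp only: sum_diff finite_S1 S1_mono)
    then have N: "\<And>m n. N \<le> n \<Longrightarrow> n \<le> m \<Longrightarrow> sum ?f (?S1 m - ?S1 n) < r"
      by (simp only: norm_sum_f)
    show "\<exists>N. \<forall>n\<ge>N. sum ?f (?S1 n - ?S2 n) < r"
    proof (intro exI allI impI)
      fix n
      assume "2 * N \<le> n"
      then have n: "N \<le> n div 2" by simp
      have "sum ?f (?S1 n - ?S2 n) \<le> sum ?f (?S1 n - ?S1 (n div 2))"
        by (intro sum_mono2 finite_Diff finite_S1 f_nonneg Diff_mono subset_refl S1_le_S2)
      also have "\<dots> < r"
        using n div_le_dividend by (rule N)
      finally show "sum ?f (?S1 n - ?S2 n) < r" .
    qed
  qed
  then have "Zfun (\<lambda>n. sum ?g (?S1 n - ?S2 n)) sequentially"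
    apply (rule Zfun_le [rule_format])
    apply (simp only: norm_sum_f)
    apply (rule order_trans [OF norm_sum sum_mono])
    apply (auto simp add: K)
    done
  then have 2: "(\<lambda>n. sum ?g (?S1 n) - sum ?g (?S2 n)) \<longlonglongrightarrow> 0"
    unfolding tendsto_Zfun_iff diff_0_right
    by (simp only: sum_diff finite_S1 S2_le_S1)
  with 1 have "(\<lambda>n. sum ?g (?S2 n)) \<longlonglongrightarrow> prod (\<Sum>k. a k) (\<Sum>k. b k)"
    by (rule Lim_transform2)
  then show ?thesis
    by (simp only: sums_def sum.triangle_reindex)
qed

definition Fx :: "real^'n^'n \<Rightarrow> real \<Rightarrow> real^'n^'n" where
  "Fx M t = (\<Sum>k. (t ^ k / fact k) *\<^sub>R mat_pow M k)"

lemma mat_cpow_Fx: "mat_cpow c M = Fx M (ln c)"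
  by (simp add: mat_cpow_def Fx_def)

lemma mat_pow_0[simp]: "mat_pow M 0 = mat 1" by (simp add: mat_pow_def)
lemma mat_pow_Suc: "mat_pow M (Suc k) = M ** mat_pow M k" by (simp add: mat_pow_def)

lemma mat_pow_add: "mat_pow (M::real^'n^'n) i ** mat_pow M j = mat_pow M (i + j)"
  by (induction i) (simp_all add: mat_pow_Suc matrix_mul_assoc[symmetric])

lemma mm_scaleR: "((x::real) *\<^sub>R (A::real^'n^'n)) ** (y *\<^sub>R B) = (x * y) *\<^sub>R (A ** B)"
  by (simp add: matrix_matrix_mult_def vec_eq_iff sum_distrib_left mult_ac)

lemma mat_pow_norm:
  assumes K: "\<And>(x::real^'n^'n) (y::real^'n^'n). norm (x ** y) \<le> norm x * norm y * K" "K > 0"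
  shows "norm (mat_pow (M::real^'n^'n) k) \<le> norm (mat 1 :: real^'n^'n) * (K * norm M) ^ k"
proof (induction k)
  case 0 then show ?case by simp
next
  case (Suc k)
  have "norm (mat_pow M (Suc k)) \<le> norm M * norm (mat_pow M k) * K"
    unfolding mat_pow_Suc by (rule K(1))
  also have "\<dots> \<le> norm M * (norm (mat 1 :: real^'n^'n) * (K * norm M) ^ k) * K"
    using Suc K by (intro mult_right_mono mult_left_mono) auto
  also have "\<dots> = norm (mat 1 :: real^'n^'n) * (K * norm M) ^ Suc k" by (simp add: mult_ac)
  finally show ?case .
qed

lemma Fx_summable_norm:
  "summable (\<lambda>k. norm ((t ^ k / fact k) *\<^sub>R mat_pow (M::real^'n^'n) k))"
proof -
  obtain K where K: "K > 0" "\<And>(x::real^'n^'n) (y::real^'n^'n). norm (x ** y) \<le> norm x * norm y * K"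
    using bounded_bilinear.pos_bounded[OF bb_mm] by blast
  have s: "summable (\<lambda>k. norm (mat 1 :: real^'n^'n) * (inverse (fact k) * (\<bar>t\<bar> * (K * norm M)) ^ k))"
    by (intro summable_mult summable_exp)
  show ?thesis
  proof (rule summable_comparison_test[OF _ s], intro exI allI impI)
    fix k :: nat
    have "norm (norm ((t ^ k / fact k) *\<^sub>R mat_pow M k)) = (\<bar>t\<bar> ^ k / fact k) * norm (mat_pow M k)"
      by (simp add: power_abs)
    also have "\<dots> \<le> (\<bar>t\<bar> ^ k / fact k) * (norm (mat 1 :: real^'n^'n) * (K * norm M) ^ k)"
      by (intro mult_left_mono mat_pow_norm K) auto
    also have "\<dots> = norm (mat 1 :: real^'n^'n) * (inverse (fact k) * (\<bar>t\<bar> * (K * norm M)) ^ k)"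
      by (simp add: power_mult_distrib field_simps)
    finally show "norm (norm ((t ^ k / fact k) *\<^sub>R mat_pow M k)) \<le> norm (mat 1 :: real^'n^'n) * (inverse (fact k) * (\<bar>t\<bar> * (K * norm M)) ^ k)" .
  qed
qed

lemma Fx_sums: "(\<lambda>k. (t ^ k / fact k) *\<^sub>R mat_pow (M::real^'n^'n) k) sums Fx M t"
  unfolding Fx_def using summable_norm_cancel[OF Fx_summable_norm] by (rule summable_sums)

lemma Fx_0: "Fx (M::real^'n^'n) 0 = mat 1"
proof -
  have "(\<lambda>k. ((0::real) ^ k / fact k) *\<^sub>R mat_pow M k) = (\<lambda>k. if k = 0 then mat_pow M k else 0)"
    by auto
  then have "(\<lambda>k. ((0::real) ^ k / fact k) *\<^sub>R mat_pow M k) sums mat_pow M 0"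
    using sums_single[of 0 "mat_pow M"] by simp
  then show ?thesis using sums_unique2[OF Fx_sums[of 0 M]] by simp
qed

lemma Fx_add: "Fx (M::real^'n^'n) (s + t) = Fx M s ** Fx M t"
proof -
  have "(\<lambda>k. \<Sum>i\<le>k. ((s ^ i / fact i) *\<^sub>R mat_pow M i) ** ((t ^ (k - i) / fact (k - i)) *\<^sub>R mat_pow M (k - i)))
      sums (Fx M s ** Fx M t)"
    using Cauchy_product_sums_bb[OF bb_mm Fx_summable_norm Fx_summable_norm]
    by (simp add: Fx_def)
  moreover have "(\<Sum>i\<le>k. ((s ^ i / fact i) *\<^sub>R mat_pow M i) ** ((t ^ (k - i) / fact (k - i)) *\<^sub>R mat_pow M (k - i)))
      = ((s + t) ^ k / fact k) *\<^sub>R mat_pow M k" for k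
  proof -
    have "(\<Sum>i\<le>k. ((s ^ i / fact i) *\<^sub>R mat_pow M i) ** ((t ^ (k - i) / fact (k - i)) *\<^sub>R mat_pow M (k - i)))
       = (\<Sum>i\<le>k. (s ^ i / fact i * (t ^ (k - i) / fact (k - i))) *\<^sub>R mat_pow M k)"
      by (intro sum.cong refl) (simp add: mm_scaleR mat_pow_add)
    also have "\<dots> = (\<Sum>i\<le>k. s ^ i / fact i * (t ^ (k - i) / fact (k - i))) *\<^sub>R mat_pow M k"
      by (simp add: scaleR_sum_left)
    also have "(\<Sum>i\<le>k. s ^ i / fact i * (t ^ (k - i) / fact (k - i))) = (s + t) ^ k / fact k"
    proof -
      have "(s + t) ^ k / fact k = (\<Sum>i\<le>k. of_nat (k choose i) * s ^ i * t ^ (k - i)) / fact k"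
        by (simp add: binomial_ring)
      also have "\<dots> = (\<Sum>i\<le>k. of_nat (k choose i) * s ^ i * t ^ (k - i) / fact k)"
        by (simp add: sum_divide_distrib)
      also have "\<dots> = (\<Sum>i\<le>k. s ^ i / fact i * (t ^ (k - i) / fact (k - i)))"
        proof (intro sum.cong refl)
          fix i assume "i \<in> {..k}"
          then have ik: "i \<le> k" by simp
          have b: "(of_nat (k choose i) :: real) = fact k / (fact i * fact (k - i))"
            using binomial_fact[OF ik] .
          define A where "A = (fact k :: real)"
          define B where "B = (fact i :: real)"
          define C where "C = (fact (k - i) :: real)"
          have "A \<noteq> 0" "B \<noteq> 0" "C \<noteq> 0" unfolding A_def B_def C_def by auto
          then have "A / (B * C) * s ^ i * t ^ (k - i) / A = s ^ i / B * (t ^ (k - i) / C)"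
            by (simp add: field_simps)
          then show "of_nat (k choose i) * s ^ i * t ^ (k - i) / fact k = s ^ i / fact i * (t ^ (k - i) / fact (k - i))"
            unfolding b A_def B_def C_def .
        qed
      finally show ?thesis by simp
    qed
    finally show ?thesis .
  qed
  ultimately have "(\<lambda>k. ((s + t) ^ k / fact k) *\<^sub>R mat_pow M k) sums (Fx M s ** Fx M t)" by simp
  then show ?thesis using Fx_sums sums_unique2 by blast
qed

lemma mat_cpow_1: "mat_cpow 1 (M::real^'n^'n) = mat 1"
  by (simp add: mat_cpow_Fx Fx_0)

lemma mat_cpow_mult: "c > 0 \<Longrightarrow> d > 0 \<Longrightarrow> mat_cpow (c * d) (M::real^'n^'n) = mat_cpow c M ** mat_cpow d M"
  by (simp add: mat_cpow_Fx ln_mult Fx_add)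

lemma mat_cpow_measurable: "(\<lambda>c. mat_cpow c (M::real^'n^'n)) \<in> borel_measurable borel"
proof (rule borel_measurable_LIMSEQ_metric)
  show "(\<lambda>c. \<Sum>k<n. (ln c ^ k / fact k) *\<^sub>R mat_pow M k) \<in> borel_measurable borel" for n
    by (intro borel_measurable_sum borel_measurable_scaleR borel_measurable_const borel_measurable_divide borel_measurable_power borel_measurable_ln measurable_ident_sets) auto
  show "(\<lambda>n. \<Sum>k<n. (ln c ^ k / fact k) *\<^sub>R mat_pow M k) \<longlonglongrightarrow> mat_cpow c M" for c
    unfolding mat_cpow_Fx using Fx_sums sums_def by blast
qed

lemma borel_measurable_vec_lambda':
  fixes f :: "'n::finite \<Rightarrow> 'a \<Rightarrow> 'b::euclidean_space"
  assumes "\<And>i. f i \<in> borel_measurable M"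
  shows "(\<lambda>x. \<chi> i. f i x) \<in> borel_measurable M"
  unfolding borel_measurable_euclidean_space[where 'c="'b^'n"]
proof
  fix v :: "'b^'n" assume "v \<in> Basis"
  then obtain i b where v: "v = axis i b" "b \<in> Basis" by (auto simp: Basis_vec_def)
  have "(\<lambda>x. (\<chi> i. f i x) \<bullet> v) = (\<lambda>x. f i x \<bullet> b)" by (simp add: v inner_axis)
  then show "(\<lambda>x. (\<chi> i. f i x) \<bullet> v) \<in> borel_measurable M"
    using assms by simp
qed

lemma vec_nth_measurable:
  fixes h :: "'a \<Rightarrow> 'b::euclidean_space^'n"
  assumes "h \<in> borel_measurable M"
  shows "(\<lambda>x. h x $ i) \<in> borel_measurable M"
proof -
  have "(\<lambda>v::'b^'n. v $ i) \<in> borel_measurable borel"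
    by (intro borel_measurable_continuous_onI continuous_intros)
  from measurable_compose[OF assms this] show ?thesis by simp
qed

lemma borel_version:
  fixes h :: "real^'m \<Rightarrow> complex^'n^'n"
  assumes "h \<in> borel_measurable lebesgue"
  shows "\<exists>g\<in>borel_measurable lborel. AE x in lborel. h x = g x"
proof -
  have hm: "(\<lambda>x. h x $ i $ j) \<in> borel_measurable lebesgue" for i j
    by (intro vec_nth_measurable assms)
  have "\<forall>ij. \<exists>g\<in>borel_measurable lborel. AE x in lborel. Re (h x $ fst ij $ snd ij) = g x"
  proof
    fix ij :: "'n \<times> 'n"
    have "(\<lambda>x. Re (h x $ fst ij $ snd ij)) \<in> borel_measurable (completion lborel)"
      using measurable_compose[OF hm borel_measurable_Re] by simp
    from completion_ex_borel_measurable_real[OF this]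
    show "\<exists>g\<in>borel_measurable lborel. AE x in lborel. Re (h x $ fst ij $ snd ij) = g x" .
  qed
  then obtain gr where "\<forall>ij. gr ij \<in> borel_measurable lborel \<and>
     (AE x in lborel. Re (h x $ fst ij $ snd ij) = gr ij x)"
    unfolding Bex_def by (rule choice[THEN exE]) blast
  then have gr: "\<And>ij. gr ij \<in> borel_measurable lborel"
     "\<And>ij. AE x in lborel. Re (h x $ fst ij $ snd ij) = gr ij x" by auto
  have "\<forall>ij. \<exists>g\<in>borel_measurable lborel. AE x in lborel. Im (h x $ fst ij $ snd ij) = g x"
  proof
    fix ij :: "'n \<times> 'n"
    have "(\<lambda>x. Im (h x $ fst ij $ snd ij)) \<in> borel_measurable (completion lborel)"
      using measurable_compose[OF hm borel_measurable_Im] by simp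
    from completion_ex_borel_measurable_real[OF this]
    show "\<exists>g\<in>borel_measurable lborel. AE x in lborel. Im (h x $ fst ij $ snd ij) = g x" .
  qed
  then obtain gi where "\<forall>ij. gi ij \<in> borel_measurable lborel \<and>
     (AE x in lborel. Im (h x $ fst ij $ snd ij) = gi ij x)"
    unfolding Bex_def by (rule choice[THEN exE]) blast
  then have gi: "\<And>ij. gi ij \<in> borel_measurable lborel"
     "\<And>ij. AE x in lborel. Im (h x $ fst ij $ snd ij) = gi ij x" by auto
  define g where "g x = (\<chi> i j. Complex (gr (i,j) x) (gi (i,j) x))" for x
  have [measurable]: "gr ij \<in> borel_measurable borel" "gi ij \<in> borel_measurable borel" for ij
    using gr(1) gi(1) by auto
  have "g \<in> borel_measurable borel"
    unfolding g_def Complex_eq by (intro borel_measurable_vec_lambda') measurable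
  then have "g \<in> borel_measurable lborel" by simp
  moreover have "AE x in lborel. h x = g x"
  proof -
    have "AE x in lborel. \<forall>ij\<in>UNIV. Re (h x $ fst ij $ snd ij) = gr ij x \<and> Im (h x $ fst ij $ snd ij) = gi ij x"
    proof (rule AE_finite_allI, simp)
      fix ij :: "'n \<times> 'n"
      obtain a b where ij: "ij = (a, b)" by fastforce
      have "AE x in lborel. Re (h x $ a $ b) = gr (a, b) x" using gr(2)[of "(a,b)"] by simp
      moreover have "AE x in lborel. Im (h x $ a $ b) = gi (a, b) x" using gi(2)[of "(a,b)"] by simp
      ultimately show "AE x in lborel. Re (h x $ fst ij $ snd ij) = gr ij x \<and> Im (h x $ fst ij $ snd ij) = gi ij x"
        unfolding ij by auto
    qed
    then show ?thesis
      by eventually_elim (auto simp: g_def vec_eq_iff complex_eq_iff)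
  qed
  ultimately show ?thesis by blast
qed

lemma cmat_mult: "cmat (A ** B) = cmat A ** cmat B"
  by (simp add: cmat_def matrix_matrix_mult_def vec_eq_iff)

lemma cmat_one: "cmat (mat 1) = mat 1"
  by (simp add: cmat_def mat_def vec_eq_iff)

lemma cont_mm: "continuous_on UNIV (\<lambda>p. fst p ** (snd p :: 'a::real_normed_field^'n^'n))"
  unfolding matrix_matrix_mult_def by (intro continuous_intros)

lemma cont_mv: "continuous_on UNIV (\<lambda>p. fst p *v (snd p :: real^'n))"
  unfolding matrix_vector_mult_def by (intro continuous_intros)

lemma cont_cmat: "continuous_on UNIV cmat"
  unfolding cmat_def by (intro continuous_intros)

lemma mat_cpow_inv: "c > 0 \<Longrightarrow> mat_cpow (1/c) M ** mat_cpow c M = mat 1"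
  using mat_cpow_mult[of "1/c" c M] by (simp add: mat_cpow_1)

lemma AE_linear_vimage:
  fixes A B :: "real^'m^'m"
  assumes "AE x in lebesgue. P x" and BA: "B ** A = mat 1"
  shows "AE x in lebesgue. P (A *v x)"
proof -
  obtain N where N0: "{x \<in> space lebesgue. \<not> P x} \<subseteq> N" "emeasure lebesgue N = 0" "N \<in> sets lebesgue"
    by (rule AE_E[OF assms(1)])
  then have N: "{x \<in> space lebesgue. \<not> P x} \<subseteq> N" "N \<in> null_sets lebesgue"
    by (auto intro: null_setsI)
  have "negligible N" using N(2) by (simp add: negligible_iff_null_sets)
  then have "negligible ((*v) B ` N)"
    by (intro negligible_differentiable_image_negligible bounded_linear_imp_differentiable_on) auto
  then have nn: "(*v) B ` N \<in> null_sets lebesgue" by (simp add: negligible_iff_null_sets)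
  have "{x \<in> space lebesgue. \<not> P (A *v x)} \<subseteq> (*v) B ` N"
  proof
    fix x assume "x \<in> {x \<in> space lebesgue. \<not> P (A *v x)}"
    then have "A *v x \<in> N" using N(1) by auto
    moreover have "x = B *v (A *v x)" by (simp add: matrix_vector_mul_assoc BA)
    ultimately show "x \<in> (*v) B ` N" by blast
  qed
  then show ?thesis using nn by (rule AE_I'[rotated])
qed

lemma AE_pos_ex:
  assumes "AE c in lborel. (c::real) > 0 \<longrightarrow> P c"
  shows "\<exists>c>0. P c"
proof (rule ccontr)
  assume "\<not> (\<exists>c>0. P c)"
  obtain N where N0: "{c \<in> space lborel. \<not> (c > 0 \<longrightarrow> P c)} \<subseteq> N" "emeasure lborel N = 0" "N \<in> sets lborel"
    by (rule AE_E[OF assms])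
  then have N: "{c \<in> space lborel. \<not> (c > 0 \<longrightarrow> P c)} \<subseteq> N" "N \<in> null_sets lborel"
    by (auto intro: null_setsI)
  with \<open>\<not> (\<exists>c>0. P c)\<close> have "{0<..1::real} \<subseteq> N" by auto
  then have "emeasure lborel {0<..1::real} \<le> emeasure lborel N"
    using N(2) by (intro emeasure_mono) auto
  then show False using N0(2) by simp
qed

theorem mainTheorem2:
  fixes E :: "real^'m^'m" and H :: "real^'n^'n" and h :: "real^'m \<Rightarrow> complex^'n^'n"
  assumes "\<forall>l. is_eigenvalue E l \<longrightarrow> Re l > 0"
    and "h \<in> borel_measurable lebesgue"
    and "\<forall>c>0. AE x in lebesgue. h (mat_cpow c E *v x) = cmat (mat_cpow c H) ** h x"
  shows "\<exists>\<phi>. left_homogeneous E H \<phi> \<and> (AE x in lebesgue. \<phi> x = h x)"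
proof -
  define A where "A c = mat_cpow c E" for c
  define C where "C c = cmat (mat_cpow c H)" for c
  have A1: "A 1 = mat 1" by (simp add: A_def mat_cpow_1)
  have C1: "C 1 = mat 1" by (simp add: C_def mat_cpow_1 cmat_one)
  have Am: "A (c * d) = A c ** A d" if "c > 0" "d > 0" for c d
    using that by (simp add: A_def mat_cpow_mult)
  have Cm: "C (c * d) = C c ** C d" if "c > 0" "d > 0" for c d
    using that by (simp add: C_def mat_cpow_mult cmat_mult)
  have Ainv: "A (1/c) ** A c = mat 1" if "c > 0" for c
    using that by (simp add: A_def mat_cpow_inv)
  have Cinv: "C (1/c) ** C c = mat 1" if "c > 0" for c
    using that by (simp add: C_def mat_cpow_inv cmat_one flip: cmat_mult)
  have Av: "A (c * d) *v x = A c *v (A d *v x)" if "c > 0" "d > 0" for c d x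
    using that by (simp add: Am matrix_vector_mul_assoc)
  have CC: "C (c * d) ** M = C c ** (C d ** M)" if "c > 0" "d > 0" for c d M
    using that by (simp add: Cm matrix_mul_assoc)
  have Ameas[measurable]: "A \<in> borel_measurable borel"
    unfolding A_def by (rule mat_cpow_measurable)
  have Cmeas[measurable]: "C \<in> borel_measurable borel"
    unfolding C_def using measurable_compose[OF mat_cpow_measurable[of H] borel_measurable_continuous_onI[OF cont_cmat]]
    by simp
  obtain g where gB: "g \<in> borel_measurable lborel" and gAE: "AE x in lborel. h x = g x"
    using borel_version[OF assms(2)] by blast
  have gB'[measurable]: "g \<in> borel_measurable borel" using gB by simp
  have gAEl: "AE x in lebesgue. h x = g x" using gAE by (rule AE_completion)
  have hyp2: "AE x in lborel. g (A c *v x) = C c ** g x" if c: "c > 0" for c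
  proof -
    have "AE x in lebesgue. h (A c *v x) = g (A c *v x)"
      using AE_linear_vimage[OF gAEl Ainv[OF c]] .
    moreover have "AE x in lebesgue. h (A c *v x) = C c ** h x"
      using assms(3) c by (simp add: A_def C_def)
    ultimately have "AE x in lebesgue. g (A c *v x) = C c ** g x"
      using gAEl by eventually_elim simp
    then show ?thesis by (simp add: AE_completion_iff)
  qed
  define Q where "Q c x = (c > 0 \<longrightarrow> g (A c *v x) = C c ** g x)" for c x
  have Qpair: "{p \<in> space (lborel \<Otimes>\<^sub>M lborel). Q (fst p) (snd p)} \<in> sets (lborel \<Otimes>\<^sub>M (lborel :: (real^'m) measure))"
  proof -
    have m1: "(\<lambda>p::real \<times> (real^'m). A (fst p) *v snd p) \<in> borel_measurable (lborel \<Otimes>\<^sub>M lborel)"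
      by (rule borel_measurable_continuous_Pair[OF _ _ cont_mv]) measurable
    have m2: "(\<lambda>p::real \<times> (real^'m). g (A (fst p) *v snd p)) \<in> borel_measurable (lborel \<Otimes>\<^sub>M lborel)"
      using measurable_compose[OF m1 gB'] by simp
    have m3: "(\<lambda>p::real \<times> (real^'m). C (fst p) ** g (snd p)) \<in> borel_measurable (lborel \<Otimes>\<^sub>M lborel)"
      by (rule borel_measurable_continuous_Pair[OF _ _ cont_mm]) measurable
    have "{p \<in> space (lborel \<Otimes>\<^sub>M lborel). Q (fst p) (snd p)} =
       {p \<in> space (lborel \<Otimes>\<^sub>M (lborel :: (real^'m) measure)). \<not> fst p > 0} \<union>
       {p \<in> space (lborel \<Otimes>\<^sub>M lborel). g (A (fst p) *v snd p) = C (fst p) ** g (snd p)}"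
      by (auto simp: Q_def)
    also have "\<dots> \<in> sets (lborel \<Otimes>\<^sub>M lborel)"
      using m2 m3 by measurable
    finally show ?thesis .
  qed
  have PS: "pair_sigma_finite (lborel :: real measure) (lborel :: (real^'m) measure)"
    by (simp add: pair_sigma_finite_def lborel.sigma_finite_measure_axioms)
  have "AE c in lborel. AE x in (lborel :: (real^'m) measure). Q c x"
    by (rule AE_I2) (auto simp: Q_def intro: hyp2)
  then have A0ae: "AE x in (lborel :: (real^'m) measure). AE c in lborel. Q c x"
    using pair_sigma_finite.AE_commute[OF PS Qpair] by simp
  define A0 where "A0 = {x. AE c in lborel. Q c x}"
  have wd: "g (A d *v x) = C d ** g x" if x: "x \<in> A0" and x': "A d *v x \<in> A0" and d: "d > 0" for x d
  proof -
    have P1: "AE c in lborel. c > 0 \<longrightarrow> g (A c *v (A d *v x)) = C c ** g (A d *v x)"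
      using x' by (simp add: A0_def Q_def)
    have cx: "continuous_on UNIV (\<lambda>M::real^'m^'m. M *v x)"
      unfolding matrix_vector_mult_def by (intro continuous_intros)
    have cg: "continuous_on UNIV (\<lambda>M::complex^'n^'n. M ** g x)"
      unfolding matrix_matrix_mult_def by (intro continuous_intros)
    have f1[measurable]: "(\<lambda>c. g (A c *v x)) \<in> borel_measurable borel"
      using measurable_compose[OF measurable_compose[OF Ameas borel_measurable_continuous_onI[OF cx]] gB'] by simp
    have f2[measurable]: "(\<lambda>c. C c ** g x) \<in> borel_measurable borel"
      using measurable_compose[OF Cmeas borel_measurable_continuous_onI[OF cg]] by simp
    have "Measurable.pred borel (\<lambda>c. Q c x)"
      unfolding Q_def by measurable
    then have "AE c in lborel. Q (0 + d * c) x"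
      using x d by (intro AE_borel_affine) (auto simp: A0_def)
    then have P2: "AE c in lborel. c > 0 \<longrightarrow> g (A (d * c) *v x) = C (d * c) ** g x"
    proof eventually_elim
      case (elim c)
      show ?case
      proof
        assume "c > 0"
        with d have "0 < d * c" by simp
        with elim show "g (A (d * c) *v x) = C (d * c) ** g x" by (simp add: Q_def)
      qed
    qed
    have PP: "AE c in lborel. c > 0 \<longrightarrow> g (A c *v (A d *v x)) = C c ** g (A d *v x) \<and> g (A (d * c) *v x) = C (d * c) ** g x"
      using P1 P2 by eventually_elim auto
    obtain c where c: "c > 0" "g (A c *v (A d *v x)) = C c ** g (A d *v x)" "g (A (d * c) *v x) = C (d * c) ** g x"
      using AE_pos_ex[OF PP] by blast
    have dc: "d * c = c * d" by (rule mult.commute)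
    have e1: "A (d*c) *v x = A c *v (A d *v x)" unfolding dc by (rule Av[OF c(1) d])
    have e2: "C (d*c) ** g x = C c ** (C d ** g x)" unfolding dc by (rule CC[OF c(1) d])
    have eq: "C c ** g (A d *v x) = C c ** (C d ** g x)"
      using c(2) c(3) e1 e2 by simp
    have "g (A d *v x) = (C (1/c) ** C c) ** g (A d *v x)" using Cinv[OF c(1)] by simp
    also have "\<dots> = C (1/c) ** (C c ** g (A d *v x))" by (simp only: matrix_mul_assoc)
    also have "\<dots> = C (1/c) ** (C c ** (C d ** g x))" by (simp only: eq)
    also have "\<dots> = (C (1/c) ** C c) ** (C d ** g x)" by (simp only: matrix_mul_assoc)
    also have "\<dots> = C d ** g x" using Cinv[OF c(1)] by simp
    finally show ?thesis .
  qed
  have wd2: "C d ** g x = C d' ** g x'"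
    if "x \<in> A0" "x' \<in> A0" "d > 0" "d' > 0" "A d *v x = A d' *v x'" for x x' d d'
  proof -
    have "x' = A (1/d') *v (A d' *v x')" using Ainv[OF that(4)] by (simp add: matrix_vector_mul_assoc)
    also have "\<dots> = A (1/d') *v (A d *v x)" using that(5) by simp
    also have "\<dots> = A (d/d') *v x" using that Av[of "1/d'" d x] by simp
    finally have x': "x' = A (d/d') *v x" .
    have dd: "d/d' > 0" using that by simp
    have "g x' = C (d/d') ** g x" unfolding x' by (rule wd[OF that(1) _ dd]) (use that x' in simp)
    then have "C d' ** g x' = C d' ** (C (d/d') ** g x)" by simp
    also have "\<dots> = C (d' * (d/d')) ** g x" by (rule CC[OF that(4) dd, symmetric])
    also have "d' * (d/d') = d" using that by simp
    finally show ?thesis by simp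
  qed
  define Orb where "Orb y = (\<exists>x d. x \<in> A0 \<and> d > 0 \<and> y = A d *v x)" for y
  define \<phi> where "\<phi> y = (if Orb y then (let p = SOME p. fst p \<in> A0 \<and> snd p > 0 \<and> y = A (snd p) *v fst p
      in C (snd p) ** g (fst p)) else 0)" for y
  have phi_eq: "\<phi> (A d *v x) = C d ** g x" if "x \<in> A0" "d > 0" for x d
  proof -
    let ?y = "A d *v x"
    have o: "Orb ?y" using that by (auto simp: Orb_def)
    define p where "p = (SOME p. fst p \<in> A0 \<and> snd p > 0 \<and> ?y = A (snd p) *v fst p)"
    have "\<exists>p. fst p \<in> A0 \<and> snd p > 0 \<and> ?y = A (snd p) *v fst p"
      using that by (intro exI[of _ "(x, d)"]) auto
    then have p: "fst p \<in> A0 \<and> snd p > 0 \<and> ?y = A (snd p) *v fst p"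
      unfolding p_def by (rule someI_ex)
    have "\<phi> ?y = C (snd p) ** g (fst p)" using o by (simp add: \<phi>_def p_def Let_def)
    also have "\<dots> = C d ** g x" using p that by (intro wd2) auto
    finally show ?thesis .
  qed
  have "left_homogeneous E H \<phi>"
    unfolding left_homogeneous_def
  proof (intro allI impI)
    fix c :: real and y assume c: "c > 0"
    show "\<phi> (mat_cpow c E *v y) = cmat (mat_cpow c H) ** \<phi> y"
    proof (cases "Orb y")
      case True
      then obtain x d where xd: "x \<in> A0" "d > 0" "y = A d *v x" by (auto simp: Orb_def)
      have "\<phi> (A c *v y) = \<phi> (A (c * d) *v x)" using xd c by (simp add: Av)
      also have "\<dots> = C (c * d) ** g x" using xd c by (intro phi_eq) auto
      also have "\<dots> = C c ** \<phi> y" using xd c by (simp add: CC phi_eq)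
      finally show ?thesis by (simp add: A_def C_def)
    next
      case False
      have "\<not> Orb (A c *v y)"
      proof
        assume "Orb (A c *v y)"
        then obtain x d where xd: "x \<in> A0" "d > 0" "A c *v y = A d *v x" by (auto simp: Orb_def)
        have "y = A (1/c) *v (A c *v y)" using Ainv[OF c] by (simp add: matrix_vector_mul_assoc)
        also have "\<dots> = A (1/c * d) *v x" using xd c Av[of "1/c" d x] by simp
        finally have "Orb y" using xd c unfolding Orb_def by (intro exI[of _ x] exI[of _ "1/c*d"]) auto
        with False show False by simp
      qed
      then show ?thesis using False by (simp add: \<phi>_def A_def C_def)
    qed
  qed
  moreover have "AE x in lebesgue. \<phi> x = h x"
  proof -
    have "AE x in lebesgue. x \<in> A0" using A0ae unfolding A0_def by (intro AE_completion) simp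
    then show ?thesis using gAEl
    proof eventually_elim
      case (elim x)
      have "\<phi> x = \<phi> (A 1 *v x)" by (simp add: A1)
      also have "\<dots> = g x" using elim phi_eq[of x 1] by (simp add: C1)
      finally show ?case using elim by simp
    qed
  qed
  ultimately show ?thesis by blast
qed

end
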